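(* Let $0=t_0<\dots<t_N=T$, $\tau_k=t_k-t_{k-1}$, $\tau=\max_k\tau_k$, $r_k=\tau_k/\tau_{k-1}$ ($2\le k\le N$). Let $r_{\max}\approx4.8645$ be the positive root of $x^3=(2x+1)^2$, fix $\delta\in(0,r_{\max})$, assume $r_2>0$ and $0<r_k\le r_{\max}-\delta$ for $3\le k\le N$, and set $c_r=r_{\max}^{5/2}$. Then the DCC kernels satisfy, for $1\le n\le N$, $$p^{(n)}_{n-j}\le c_r\delta^{-1}\sqrt{\tau_j}\sqrt\tau,\qquad 2\le j\le n,$$ $$p^{(n)}_{n-1}\le\tau_1+c_r\delta^{-1}\sqrt{\tau_2}\sqrt\tau.$$
   Context: BDF2 kernels: $b^{(1)}_0=1/\tau_1$; for $n\ge2$, $b^{(n)}_0=\frac{1+2r_n}{\tau_n(1+r_n)}$, $b^{(n)}_1=-\frac{r_n^2}{\tau_n(1+r_n)}$, $b^{(n)}_j=0$ for $2\le j\le n-1$. The discrete complementary convolution (DCC) kernels $p^{(n)}_{n-j}$ ($1\le j\le n$) are defined by $\sum_{j=k}^np^{(n)}_{n-j}b^{(j)}_{j-k}=1$ for all $1\le k\le n$. *)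

theory Defs
  imports Complex_Main
begin

definition tau :: "(nat \<Rightarrow> real) \<Rightarrow> nat \<Rightarrow> real" where
  "tau t k = t k - t (k - 1)"

definition tau_max :: "(nat \<Rightarrow> real) \<Rightarrow> nat \<Rightarrow> real" where
  "tau_max t N = Max (tau t ` {1..N})"

definition ratio :: "(nat \<Rightarrow> real) \<Rightarrow> nat \<Rightarrow> real" where
  "ratio t k = tau t k / tau t (k - 1)"

definition bdf2 :: "(nat \<Rightarrow> real) \<Rightarrow> nat \<Rightarrow> nat \<Rightarrow> real" where
  "bdf2 t n j =
     (if n = 1 then (if j = 0 then 1 / tau t 1 else 0)
      else if j = 0 then (1 + 2 * ratio t n) / (tau t n * (1 + ratio t n))
      else if j = 1 then - (ratio t n)\<^sup>2 / (tau t n * (1 + ratio t n))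
      else 0)"

text \<open>DCC kernels: p n i stands for p^(n)_i; they are characterised by the
  discrete complementary convolution identities.\<close>
definition is_dcc :: "(nat \<Rightarrow> real) \<Rightarrow> nat \<Rightarrow> (nat \<Rightarrow> nat \<Rightarrow> real) \<Rightarrow> bool" where
  "is_dcc t N p \<longleftrightarrow>
     (\<forall>n\<in>{1..N}. \<forall>k\<in>{1..n}. (\<Sum>j=k..n. p n (n - j) * bdf2 t j (j - k)) = 1)"

definition r_max :: real where
  "r_max = (THE x. x > 0 \<and> x ^ 3 = (2 * x + 1)\<^sup>2)"

definition c_r :: real where
  "c_r = r_max powr (5 / 2)"

end

theory Submission
  imports Defs
begin
lemma rmax_ex: "\<exists>x::real. x > 0 \<and> x ^ 3 = (2 * x + 1)\<^sup>2"
proof -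
  have "\<exists>x\<ge>4. x \<le> 5 \<and> (\<lambda>x::real. x^3 - (2*x+1)^2) x = 0"
    by (rule IVT) (auto intro!: continuous_intros simp: power2_eq_square)
  then obtain x::real where "x \<ge> 4" "x^3 - (2*x+1)^2 = 0" by auto
  then show ?thesis by (intro exI[of _ x]) auto
qed
lemma rmax_uniq: "(x::real) > 0 \<Longrightarrow> x ^ 3 = (2 * x + 1)\<^sup>2 \<Longrightarrow> y > 0 \<Longrightarrow> y ^ 3 = (2 * y + 1)\<^sup>2 \<Longrightarrow> x = y"
proof (rule ccontr)
  assume a: "x > 0" "x ^ 3 = (2 * x + 1)\<^sup>2" "y > 0" "y ^ 3 = (2 * y + 1)\<^sup>2" "x \<noteq> y"
  { fix u :: real assume u: "u > 0" "u ^ 3 = (2 * u + 1)\<^sup>2"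
    have "u = u^3/u^2" using u(1) by (simp add: power2_eq_square power3_eq_cube)
    also have "\<dots> = (2*u+1)^2/u^2" using u by simp
    also have "\<dots> = 4 + 4/u + 1/u^2" using u by (simp add: field_simps power2_eq_square)
    finally have "u = 4 + 4/u + 1/u^2" . }
  note e = this
  have ex: "x = 4 + 4/x + 1/x^2" using a e by blast
  have ey: "y = 4 + 4/y + 1/y^2" using a e by blast
  { fix u v :: real assume "0 < u" "u < v" "u = 4 + 4/u + 1/u^2" "v = 4 + 4/v + 1/v^2"
    then have "4/v < 4/u" "1/v^2 < 1/u^2" by (auto simp: frac_less2 power_strict_mono)
    then have False using \<open>u < v\<close> \<open>u = _\<close> \<open>v = _\<close> by linarith }
  then show False using a ex ey by (metis linorder_neqE_linordered_idom)
qed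
lemma rmax: "r_max > 0" "r_max ^ 3 = (2 * r_max + 1)\<^sup>2"
proof -
  obtain x::real where x: "x > 0 \<and> x ^ 3 = (2 * x + 1)\<^sup>2" using rmax_ex by blast
  have "r_max = x" unfolding r_max_def
    by (rule the_equality[where P="\<lambda>x. x > 0 \<and> x ^ 3 = (2 * x + 1)\<^sup>2", OF x]) (use x rmax_uniq in blast)
  then show "r_max > 0" "r_max ^ 3 = (2 * r_max + 1)\<^sup>2" using x by auto
qed
lemma polyineq:
  fixes s R :: real
  assumes "0 \<le> s" "s \<le> R" "R > 0" "R^3 = 2*R^2+1"
  shows "s^3/(1+2*s^2) \<le> 1 - (R^2-s^2)/R^5"
proof -
  have R2: "R \<ge> 2"
  proof (rule ccontr)
    assume "\<not> R \<ge> 2"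
    then have "R*R^2 < 2*R^2" using assms(3) by (intro mult_strict_right_mono) auto
    then show False using assms(4) by (simp add: power3_eq_cube power2_eq_square)
  qed
  have fact: "1+2*s^2 - s^3 = (R-s)*(s^2+(R-2)*s+R*(R-2))" using assms(4) by (simp add: algebra_simps power2_eq_square power3_eq_cube)
  have c1: "R^3 - 2*R^2 = 1" using assms(4) by simp
  have "R^5*(R*(R-2)) = R^4*(R^3 - 2*R^2)" by algebra
  then have e1: "R^5*(R*(R-2)) = R^4" using c1 by simp
  have "R^5*(R-2) = R^3*(R^3 - 2*R^2)" by algebra
  then have e2: "R^5*(R-2) = R^3" using c1 by simp
  have "R^4 \<ge> 2^4" using R2 by (intro power_mono) auto
  then have h1: "4*R*s^2 \<le> R^5*s^2" using assms R2 by (simp add: power_numeral_reduce mult_right_mono)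
  have "R^4 \<ge> R" using R2 by (smt (verit) self_le_power zero_less_numeral)
  have "R^3 \<ge> 1" using R2 by (smt (verit) one_le_power)
  then have h2: "s \<le> R^3*s" using assms(1) mult_right_mono[of 1 "R^3" s] by linarith
  have h3: "2*s^3 \<le> 2*R*s^2" using assms by (simp add: power_numeral_reduce mult_right_mono mult_left_mono)
  have "(R+s)*(1+2*s^2) = R + s + 2*R*s^2 + 2*s^3" by (simp add: algebra_simps power_numeral_reduce)
  also have "\<dots> \<le> R^4 + R^3*s + R^5*s^2" using h1 h2 h3 \<open>R^4 \<ge> R\<close> by linarith
  also have "\<dots> = R^5 * (s^2+(R-2)*s+R*(R-2))"
  proof -
    have "R^5 * (s^2+(R-2)*s+R*(R-2)) = R^5*s^2 + (R^5*(R-2))*s + R^5*(R*(R-2))" by algebra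
    then show ?thesis using e1 e2 by simp
  qed
  finally have "(R+s)*(1+2*s^2) \<le> R^5 * (s^2+(R-2)*s+R*(R-2))" .
  then have "(R-s)*((R+s)*(1+2*s^2)) \<le> (R-s)*(R^5 * (s^2+(R-2)*s+R*(R-2)))"
    using assms by (intro mult_left_mono) auto
  then have "(R^2-s^2)*(1+2*s^2) \<le> R^5*(1+2*s^2 - s^3)" unfolding fact by (simp add: algebra_simps power2_eq_square)
  moreover have "R^5 > 0" using assms by auto
  moreover have "1+2*s^2 > 0" using zero_le_power2[of s] by linarith
  ultimately show ?thesis by (simp add: field_simps)
qed
lemma Rfacts: "sqrt r_max \<ge> 2" "sqrt r_max ^ 3 = 2 * sqrt r_max ^ 2 + 1" "c_r = sqrt r_max ^ 5"
proof -
  define R where "R = sqrt r_max"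
  have R0: "R > 0" using rmax(1) by (simp add: R_def)
  have RR: "R^2 = r_max" using rmax(1) by (simp add: R_def)
  have h: "(R^3)^2 = (2*R^2+1)^2" using rmax(2) unfolding RR[symmetric] by (simp add: power_mult[symmetric])
  have "R^3 \<ge> 0" "2*R^2+1 \<ge> 0" using R0 by auto
  from power2_eq_iff_nonneg[OF this] h have R3R: "R^3 = 2*R^2+1" by blast
  then show R3: "sqrt r_max ^ 3 = 2 * sqrt r_max ^ 2 + 1" unfolding R_def .
  have "R \<ge> 2"
  proof (rule ccontr)
    assume "\<not> R \<ge> 2"
    then have "R*R^2 < 2*R^2" using R0 by (intro mult_strict_right_mono) auto
    then show False using R3R by (simp add: power3_eq_cube power2_eq_square)
  qed
  then show "sqrt r_max \<ge> 2" by (simp add: R_def)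
  have "c_r = (r_max powr (1/2)) powr 5" by (simp add: c_r_def powr_powr)
  also have "\<dots> = sqrt r_max ^ 5" using rmax(1) by (simp add: powr_half_sqrt powr_realpow)
  finally show "c_r = sqrt r_max ^ 5" .
qed

lemma gbound:
  assumes "0 < r" "r \<le> r_max - \<delta>" "0 < \<delta>"
  shows "r * sqrt r / (1 + 2*r) \<le> 1 - \<delta> / c_r"
proof -
  define R where "R = sqrt r_max"
  define s where "s = sqrt r"
  have R2: "R \<ge> 2" using Rfacts by (simp add: R_def)
  have RR: "R^2 = r_max" using rmax(1) by (simp add: R_def)
  have ss: "s^2 = r" using assms by (simp add: s_def)
  have "s \<le> R" unfolding s_def R_def using assms by (intro real_sqrt_le_mono) auto
  have "s^3/(1+2*s^2) \<le> 1 - (R^2-s^2)/R^5"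
    by (rule polyineq) (use \<open>s \<le> R\<close> R2 Rfacts(2) assms rmax(1) in \<open>auto simp: R_def s_def\<close>)
  moreover have "r * sqrt r = s^3" using ss by (simp add: s_def power3_eq_cube power2_eq_square)
  moreover have "\<delta> / c_r \<le> (R^2-s^2)/R^5"
    using assms R2 by (simp add: Rfacts(3) R_def[symmetric] RR ss divide_right_mono)
  ultimately show ?thesis using ss by simp
qed

lemma cancel1:
  fixes r W c :: real
  assumes "1 + r \<noteq> 0"
  shows "((1 + r) * W) * (r / ((1 + r) * c)) = W * (r / c)"
proof -
  have "((1 + r) * W) * (r / ((1 + r) * c)) = (W * r) * (1 + r) / (c * (1 + r))" by (simp add: mult_ac)
  also have "\<dots> = (W * r) / c" using assms by (rule mult_divide_mult_cancel_right)
  finally show ?thesis by simp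
qed

lemma step_bound:
  fixes a b r rk S B X Y :: real
  assumes "a > 0" "b > 0" "rk > 0" "r = b / a" "S \<ge> 0" "B > 0"
    and "a \<le> sqrt a * S" and "r * sqrt r / (1 + 2*r) * B + 1 \<le> B"
    and "Y * (1 + 2*r) \<le> (1 + r) * sqrt b * S * B"
    and "X * ((1 + 2*rk) / (a * (1 + rk))) + Y * (- r\<^sup>2 / (b * (1 + r))) = 1"
  shows "X * (1 + 2*rk) \<le> (1 + rk) * sqrt a * S * B"
proof -
  have r0: "r > 0" using assms by simp
  have bra: "b = r * a" using assms by simp
  have r1: "1 + r \<noteq> 0" "1 + rk \<noteq> 0" "a + a*rk \<noteq> 0" "a + a*r \<noteq> 0" "a*r + a*(r*r) \<noteq> 0"
  proof -
    have "a*rk>0" "a*r>0" "a*(r*r)>0" using r0 assms(1,3) by simp_all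
    then show "1 + r \<noteq> 0" "1 + rk \<noteq> 0" "a + a*rk \<noteq> 0" "a + a*r \<noteq> 0" "a*r + a*(r*r) \<noteq> 0"
      using r0 assms(1,3) by linarith+
  qed
  have eqX: "X * (1 + 2*rk) = (1 + rk) * (a + Y * r / (1 + r))"
  proof -
    have "X * (1 + 2*rk) = (1 + rk) * a * (X * ((1 + 2*rk) / (a * (1 + rk))))"
      using assms(1) r1 by (simp add: field_simps)
    also have "X * ((1 + 2*rk) / (a * (1 + rk))) = 1 + Y * r\<^sup>2 / (b * (1 + r))"
      using assms(10) by (simp add: algebra_simps)
    also have "Y * r\<^sup>2 / (b * (1 + r)) = Y * r / (a * (1 + r))"
      using r0 r1 assms(1) unfolding bra by (simp add: field_simps power2_eq_square)
    also have "(1 + rk) * a * (1 + Y * r / (a * (1 + r))) = (1 + rk) * (a + Y * r / (1 + r))"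
      using assms(1) r1 by (simp add: field_simps)
    finally show ?thesis .
  qed
  have sb: "sqrt b = sqrt r * sqrt a" unfolding bra by (simp add: real_sqrt_mult)
  have "Y * r / (1 + r) = (Y * (1 + 2*r)) * (r / ((1 + r) * (1 + 2*r)))"
  proof -
    have "(Y * (1 + 2*r)) * (r / ((1 + r) * (1 + 2*r))) = (Y * r) * (1 + 2*r) / ((1 + r) * (1 + 2*r))"
      by (simp add: mult_ac)
    also have "\<dots> = Y * r / (1 + r)" using r0 by (intro mult_divide_mult_cancel_right) auto
    finally show ?thesis by simp
  qed
  also have "\<dots> \<le> ((1 + r) * sqrt b * S * B) * (r / ((1 + r) * (1 + 2*r)))"
    using r0 assms(9) by (intro mult_right_mono) auto
  also have "\<dots> = (sqrt b * S * B) * (r / (1 + 2*r))"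
    using cancel1[of r "sqrt b * S * B" "1 + 2*r"] r0 by (simp add: mult_ac)
  also have "\<dots> = (r * sqrt r / (1 + 2*r) * B) * (sqrt a * S)"
    unfolding sb by (simp add: mult_ac)
  also have "\<dots> \<le> (B - 1) * (sqrt a * S)"
    using assms(1,5,8) by (intro mult_right_mono) auto
  finally have "a + Y * r / (1 + r) \<le> sqrt a * S * B" using assms(7) by (simp add: algebra_simps)
  then have "(1 + rk) * (a + Y * r / (1 + r)) \<le> (1 + rk) * (sqrt a * S * B)"
    using assms(3) by (intro mult_left_mono) auto
  then show ?thesis using eqX by (simp add: mult_ac)
qed

lemma first_bound:
  fixes a b r S B X Y :: real
  assumes "a > 0" "b > 0" "r = b / a" "S \<ge> 0" "B > 0"
    and "Y * (1 + 2*r) \<le> (1 + r) * sqrt b * S * B"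
    and "X * (1 / a) + Y * (- r\<^sup>2 / (b * (1 + r))) = 1"
  shows "X \<le> a + sqrt b * S * B"
proof -
  have r0: "r > 0" using assms by simp
  have bra: "b = r * a" using assms by simp
  have eqX: "X = a + Y * r / (1 + r)"
  proof -
    have r1: "1 + r \<noteq> 0" "a + a*r \<noteq> 0" "a*r + a*(r*r) \<noteq> 0"
    proof -
      have "a*r>0" "a*(r*r)>0" using r0 assms(1) by simp_all
      then show "1 + r \<noteq> 0" "a + a*r \<noteq> 0" "a*r + a*(r*r) \<noteq> 0"
        using r0 assms(1) by linarith+
    qed
    have "X = a * (X * (1 / a))" using assms by simp
    also have "X * (1 / a) = 1 + Y * r\<^sup>2 / (b * (1 + r))"
      using assms(7) by (simp add: algebra_simps)
    also have "Y * r\<^sup>2 / (b * (1 + r)) = Y * r / (a * (1 + r))"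
      using r0 r1 assms(1) unfolding bra by (simp add: field_simps power2_eq_square)
    also have "a * (1 + Y * r / (a * (1 + r))) = a + Y * r / (1 + r)"
      using assms(1) r1 by (simp add: field_simps)
    finally show ?thesis .
  qed
  have "Y * r / (1 + r) = (Y * (1 + 2*r)) * (r / ((1 + r) * (1 + 2*r)))"
  proof -
    have "(Y * (1 + 2*r)) * (r / ((1 + r) * (1 + 2*r))) = (Y * r) * (1 + 2*r) / ((1 + r) * (1 + 2*r))"
      by (simp add: mult_ac)
    also have "\<dots> = Y * r / (1 + r)" using r0 by (intro mult_divide_mult_cancel_right) auto
    finally show ?thesis by simp
  qed
  also have "\<dots> \<le> ((1 + r) * sqrt b * S * B) * (r / ((1 + r) * (1 + 2*r)))"
    using r0 assms(6) by (intro mult_right_mono) auto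
  also have "\<dots> = (sqrt b * S * B) * (r / (1 + 2*r))"
    using cancel1[of r "sqrt b * S * B" "1 + 2*r"] r0 by (simp add: mult_ac)
  also have "\<dots> \<le> (sqrt b * S * B) * 1"
  proof -
    have "r / (1 + 2*r) \<le> 1" using r0 by simp
    then show ?thesis using assms(2,4,5) by (intro mult_left_mono) auto
  qed
  finally show ?thesis using eqX by simp
qed

lemma final_bound:
  fixes r X Z :: real
  assumes "r > 0" "Z \<ge> 0" "X * (1 + 2*r) \<le> (1 + r) * Z"
  shows "X \<le> Z"
proof -
  have "X \<le> (1 + r) * Z / (1 + 2*r)" using assms by (simp add: field_simps)
  also have "\<dots> \<le> (1 + 2*r) * Z / (1 + 2*r)" using assms by (intro divide_right_mono mult_right_mono) auto
  finally show ?thesis using assms by simp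
qed
lemma base_bound:
  fixes a rk S B X :: real
  assumes "a > 0" "rk > 0" "S \<ge> 0" "B \<ge> 1" "a \<le> sqrt a * S"
    and "X * ((1 + 2*rk) / (a * (1 + rk))) = 1"
  shows "X * (1 + 2*rk) \<le> (1 + rk) * sqrt a * S * B"
proof -
  have "1 + rk > 0" using assms(2) by simp
  then have nz: "a * (1 + rk) \<noteq> 0" using assms(1) by simp
  have "X * (1 + 2*rk) = (X * ((1 + 2*rk) / (a * (1 + rk)))) * (a * (1 + rk))"
    using nz by simp
  also have "\<dots> = a * (1 + rk)" by (simp only: assms(6) mult_1_left)
  also have "\<dots> \<le> (sqrt a * S * B) * (1 + rk)"
  proof -
    have "sqrt a * S * 1 \<le> sqrt a * S * B" using assms by (intro mult_left_mono) auto
    then have "a \<le> sqrt a * S * B" using assms(5) by simp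
    then show ?thesis using assms(2) by (intro mult_right_mono) auto
  qed
  finally show ?thesis by (simp add: mult_ac)
qed

lemma dcc_one:
  assumes "is_dcc t N p" "1 \<le> n" "n \<le> N"
  shows "p n 0 * bdf2 t n 0 = 1"
proof -
  have "\<forall>k\<in>{1..n}. (\<Sum>j=k..n. p n (n-j) * bdf2 t j (j-k)) = 1"
    using assms unfolding is_dcc_def by auto
  moreover have "n \<in> {1..n}" using assms(2) by simp
  ultimately have "(\<Sum>j=n..n. p n (n-j) * bdf2 t j (j-n)) = 1" by (rule bspec)
  then show ?thesis by simp
qed

lemma dcc_two:
  assumes "is_dcc t N p" "n \<le> N" "1 \<le> k" "k < n"
  shows "p n (n - k) * bdf2 t k 0 + p n (n - Suc k) * bdf2 t (Suc k) 1 = 1"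
proof -
  have "(\<Sum>j=k..n. p n (n - j) * bdf2 t j (j - k)) = 1"
    using assms unfolding is_dcc_def by auto
  also have "(\<Sum>j=k..n. p n (n - j) * bdf2 t j (j - k)) =
     p n (n - k) * bdf2 t k 0 + (p n (n - Suc k) * bdf2 t (Suc k) 1 +
       (\<Sum>j=Suc (Suc k)..n. p n (n - j) * bdf2 t j (j - k)))"
    using assms by (simp add: sum.atLeast_Suc_atMost)
  also have "(\<Sum>j=Suc (Suc k)..n. p n (n - j) * bdf2 t j (j - k)) = 0"
    by (rule sum.neutral) (auto simp: bdf2_def)
  finally show ?thesis by simp
qed

lemma bdf2_0: "2 \<le> k \<Longrightarrow> bdf2 t k 0 = (1 + 2 * ratio t k) / (tau t k * (1 + ratio t k))"
  by (simp add: bdf2_def)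
lemma bdf2_1: "1 \<le> k \<Longrightarrow> bdf2 t (Suc k) 1 = - (ratio t (Suc k))\<^sup>2 / (tau t (Suc k) * (1 + ratio t (Suc k)))"
  by (simp add: bdf2_def)
lemma bdf2_10: "bdf2 t 1 0 = 1 / tau t 1"
  by (simp add: bdf2_def)

theorem mainTheorem6:
  fixes t :: "nat \<Rightarrow> real" and N :: nat and T \<delta> :: real
    and p :: "nat \<Rightarrow> nat \<Rightarrow> real"
  assumes "N \<ge> 1"
    and "t 0 = 0" and "t N = T"
    and "\<And>k. 1 \<le> k \<Longrightarrow> k \<le> N \<Longrightarrow> t (k - 1) < t k"
    and "0 < \<delta>" and "\<delta> < r_max"
    and "2 \<le> N \<Longrightarrow> ratio t 2 > 0"
    and "\<And>k. 3 \<le> k \<Longrightarrow> k \<le> N \<Longrightarrow> 0 < ratio t k \<and> ratio t k \<le> r_max - \<delta>"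
    and "is_dcc t N p"
  shows "\<forall>n\<in>{1..N}.
           (\<forall>j\<in>{2..n}. p n (n - j) \<le> c_r / \<delta> * sqrt (tau t j) * sqrt (tau_max t N))
         \<and> (2 \<le> N \<longrightarrow> p n (n - 1) \<le> tau t 1 + c_r / \<delta> * sqrt (tau t 2) * sqrt (tau_max t N))"
proof
  fix n assume nN: "n \<in> {1..N}"
  define S where "S = sqrt (tau_max t N)"
  define B where "B = c_r / \<delta>"
  have tpos: "tau t k > 0" if "1 \<le> k" "k \<le> N" for k
    using assms(4)[OF that] by (simp add: tau_def)
  have tle: "tau t k \<le> tau_max t N" if "1 \<le> k" "k \<le> N" for k
    unfolding tau_max_def using that by (intro Max_ge) auto
  have S0: "S \<ge> 0" using tle[of 1] tpos[of 1] assms(1) by (simp add: S_def)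
  have tsq: "tau t k \<le> sqrt (tau t k) * S" if "1 \<le> k" "k \<le> N" for k
  proof -
    have "tau t k = sqrt (tau t k) * sqrt (tau t k)" using tpos[OF that] by simp
    also have "\<dots> \<le> sqrt (tau t k) * S" unfolding S_def
      using tle[OF that] tpos[OF that] by (intro mult_left_mono real_sqrt_le_mono) auto
    finally show ?thesis .
  qed
  have rdef: "ratio t k = tau t k / tau t (k - 1)" for k by (simp add: ratio_def)
  have rpos: "ratio t k > 0" if "2 \<le> k" "k \<le> N" for k
    using tpos[of k] tpos[of "k - 1"] that by (simp add: rdef)
  have crpos: "c_r \<ge> r_max"
  proof -
    have "sqrt r_max ^ 2 \<le> sqrt r_max ^ 5" by (intro power_increasing) (use Rfacts(1) in linarith)+
    then show ?thesis using rmax(1) by (simp add: Rfacts(3))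
  qed
  have B1: "B \<ge> 1" unfolding B_def using crpos assms(5,6) by simp
  have gB: "ratio t k * sqrt (ratio t k) / (1 + 2 * ratio t k) * B + 1 \<le> B" if "3 \<le> k" "k \<le> N" for k
  proof -
    have g: "ratio t k * sqrt (ratio t k) / (1 + 2 * ratio t k) \<le> 1 - \<delta> / c_r"
      using assms(8)[OF that] assms(5) by (intro gbound) auto
    have "ratio t k * sqrt (ratio t k) / (1 + 2 * ratio t k) * B \<le> (1 - \<delta> / c_r) * B"
      using g B1 by (intro mult_right_mono) auto
    also have "\<dots> = B - 1" unfolding B_def using crpos assms(5,6) by (simp add: field_simps)
    finally show ?thesis by simp
  qed
  have inv: "\<forall>k. k + d = n \<longrightarrow> 2 \<le> k \<longrightarrow>
      p n (n - k) * (1 + 2 * ratio t k) \<le> (1 + ratio t k) * sqrt (tau t k) * S * B" for d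
  proof (induction d)
    case 0
    show ?case
    proof (intro allI impI)
      fix k assume k: "k + 0 = n" "2 \<le> k"
      have b: "bdf2 t n 0 = (1 + 2 * ratio t n) / (tau t n * (1 + ratio t n))"
        using k by (intro bdf2_0) simp
      have "p n 0 * bdf2 t n 0 = 1" using dcc_one[OF assms(9)] nN by auto
      then have "p n 0 * ((1 + 2 * ratio t n) / (tau t n * (1 + ratio t n))) = 1"
        unfolding b .
      then show "p n (n - k) * (1 + 2 * ratio t k) \<le> (1 + ratio t k) * sqrt (tau t k) * S * B"
        using k nN by (intro base_bound[OF _ _ S0 B1]) (auto intro!: tpos rpos tsq)
    qed
  next
    case (Suc d)
    show ?case
    proof (intro allI impI)
      fix k assume k: "k + Suc d = n" "2 \<le> k"
      have IH: "p n (n - Suc k) * (1 + 2 * ratio t (Suc k)) \<le> (1 + ratio t (Suc k)) * sqrt (tau t (Suc k)) * S * B"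
        using Suc.IH k by auto
      have eq: "p n (n - k) * bdf2 t k 0 + p n (n - Suc k) * bdf2 t (Suc k) 1 = 1"
        using dcc_two[OF assms(9)] k nN by auto
      show "p n (n - k) * (1 + 2 * ratio t k) \<le> (1 + ratio t k) * sqrt (tau t k) * S * B"
      proof (rule step_bound[OF _ _ _ _ S0 _ _ _ IH])
        show "tau t k > 0" "tau t (Suc k) > 0" "ratio t k > 0" using k nN by (auto intro!: tpos rpos)
        show "ratio t (Suc k) = tau t (Suc k) / tau t k" by (simp add: rdef)
        show "B > 0" using B1 by simp
        show "tau t k \<le> sqrt (tau t k) * S" using k nN by (auto intro!: tsq)
        show "ratio t (Suc k) * sqrt (ratio t (Suc k)) / (1 + 2 * ratio t (Suc k)) * B + 1 \<le> B"
          using k nN by (intro gB) auto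
        show "p n (n - k) * ((1 + 2 * ratio t k) / (tau t k * (1 + ratio t k))) +
          p n (n - Suc k) * (- (ratio t (Suc k))\<^sup>2 / (tau t (Suc k) * (1 + ratio t (Suc k)))) = 1"
        proof -
          have b0: "bdf2 t k 0 = (1 + 2 * ratio t k) / (tau t k * (1 + ratio t k))"
            using k by (intro bdf2_0) simp
          have b1: "bdf2 t (Suc k) 1 = - (ratio t (Suc k))\<^sup>2 / (tau t (Suc k) * (1 + ratio t (Suc k)))"
            using k by (intro bdf2_1) simp
          show ?thesis using eq unfolding b0 b1 .
        qed
      qed
    qed
  qed
  have invj: "p n (n - j) * (1 + 2 * ratio t j) \<le> (1 + ratio t j) * (sqrt (tau t j) * S * B)"
    if "2 \<le> j" "j \<le> n" for j
    using inv[of "n - j"] that by (simp add: mult_ac)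
  show "(\<forall>j\<in>{2..n}. p n (n - j) \<le> c_r / \<delta> * sqrt (tau t j) * sqrt (tau_max t N))
         \<and> (2 \<le> N \<longrightarrow> p n (n - 1) \<le> tau t 1 + c_r / \<delta> * sqrt (tau t 2) * sqrt (tau_max t N))"
  proof (intro conjI ballI impI)
    fix j assume j: "j \<in> {2..n}"
    have h1: "ratio t j > 0" using j nN by (intro rpos) auto
    have "tau t j > 0" using j nN by (intro tpos) auto
    then have h2: "0 \<le> sqrt (tau t j) * S * B" using S0 B1 by simp
    have h3: "p n (n - j) * (1 + 2 * ratio t j) \<le> (1 + ratio t j) * (sqrt (tau t j) * S * B)"
      using invj j by auto
    have "p n (n - j) \<le> sqrt (tau t j) * S * B" by (rule final_bound[OF h1 h2 h3])
    then show "p n (n - j) \<le> c_r / \<delta> * sqrt (tau t j) * sqrt (tau_max t N)"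
      by (simp add: S_def B_def mult_ac)
  next
    assume N2: "2 \<le> N"
    have "tau t 2 > 0" using N2 by (intro tpos) auto
    then have pos: "0 \<le> sqrt (tau t 2) * S * B" using B1 S0 by simp
    have "p n (n - 1) \<le> tau t 1 + sqrt (tau t 2) * S * B"
    proof (cases "n = 1")
      case True
      have "p 1 0 * bdf2 t 1 0 = 1" using dcc_one[OF assms(9)] nN True by auto
      then have "p 1 0 * (1 / tau t 1) = 1" unfolding bdf2_10 .
      then have "p 1 0 = tau t 1" using tpos[of 1] assms(1) by (simp add: field_simps)
      then show ?thesis using True pos by simp
    next
      case False
      then have n2: "2 \<le> n" using nN by auto
      have eq: "p n (n - 1) * bdf2 t 1 0 + p n (n - Suc 1) * bdf2 t (Suc 1) 1 = 1"
        using dcc_two[OF assms(9), of n 1] n2 nN by auto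
      show ?thesis
      proof (rule first_bound[OF _ _ _ S0])
        show "tau t 1 > 0" "tau t 2 > 0" using N2 assms(1) by (auto intro!: tpos)
        show "ratio t 2 = tau t 2 / tau t 1" by (simp add: rdef)
        show "B > 0" using B1 by simp
        show "p n (n - 2) * (1 + 2 * ratio t 2) \<le> (1 + ratio t 2) * sqrt (tau t 2) * S * B"
          using inv[of "n - 2"] n2 by auto
        show "p n (n - 1) * (1 / tau t 1) + p n (n - 2) * (- (ratio t 2)\<^sup>2 / (tau t 2 * (1 + ratio t 2))) = 1"
        proof -
          have b1: "bdf2 t (Suc 1) 1 = - (ratio t (Suc 1))\<^sup>2 / (tau t (Suc 1) * (1 + ratio t (Suc 1)))"
            by (rule bdf2_1) simp
          have b2: "bdf2 t 2 1 = - (ratio t 2)\<^sup>2 / (tau t 2 * (1 + ratio t 2))"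
            using b1 unfolding Suc_1 .
          show ?thesis using eq unfolding Suc_1 bdf2_10 b2 .
        qed
      qed
    qed
    then show "p n (n - 1) \<le> tau t 1 + c_r / \<delta> * sqrt (tau t 2) * sqrt (tau_max t N)"
      by (simp add: S_def B_def mult_ac)
  qed
qed
end
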